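(* Every SB-generated group has uncountable cofinality, i.e., it cannot be expressed as the union of a strictly increasing sequence $H_1\subsetneq H_2\subsetneq\cdots$ of subgroups.
   Context: A subset of a group $G$ is strongly bounded if it has finite diameter in every left-invariant metric on $G$; a group is SB-generated if it is generated by a strongly bounded subset. *)

theory Defs
  imports "HOL-Algebra.Algebra"
begin

definition left_invariant_metric :: "('a, 'b) monoid_scheme \<Rightarrow> ('a \<Rightarrow> 'a \<Rightarrow> real) \<Rightarrow> bool" where
  "left_invariant_metric G d \<longleftrightarrow>
     (\<forall>x\<in>carrier G. \<forall>y\<in>carrier G. 0 \<le> d x y) \<and>
     (\<forall>x\<in>carrier G. \<forall>y\<in>carrier G. d x y = 0 \<longleftrightarrow> x = y) \<and>
     (\<forall>x\<in>carrier G. \<forall>y\<in>carrier G. d x y = d y x) \<and>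
     (\<forall>x\<in>carrier G. \<forall>y\<in>carrier G. \<forall>z\<in>carrier G. d x z \<le> d x y + d y z) \<and>
     (\<forall>g\<in>carrier G. \<forall>x\<in>carrier G. \<forall>y\<in>carrier G. d (g \<otimes>\<^bsub>G\<^esub> x) (g \<otimes>\<^bsub>G\<^esub> y) = d x y)"

definition strongly_bounded :: "('a, 'b) monoid_scheme \<Rightarrow> 'a set \<Rightarrow> bool" where
  "strongly_bounded G A \<longleftrightarrow> A \<subseteq> carrier G \<and>
     (\<forall>d. left_invariant_metric G d \<longrightarrow> (\<exists>M::real. \<forall>x\<in>A. \<forall>y\<in>A. d x y \<le> M))"

definition SB_generated :: "('a, 'b) monoid_scheme \<Rightarrow> bool" where
  "SB_generated G \<longleftrightarrow> (\<exists>S. strongly_bounded G S \<and> generate G S = carrier G)"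

definition uncountable_cofinality :: "('a, 'b) monoid_scheme \<Rightarrow> bool" where
  "uncountable_cofinality G \<longleftrightarrow>
     \<not> (\<exists>H :: nat \<Rightarrow> 'a set. (\<forall>n. subgroup (H n) G) \<and> (\<forall>n. H n \<subset> H (Suc n))
          \<and> (\<Union>n. H n) = carrier G)"

end

theory Submission
  imports Defs
begin

lemma (in group) main_aux:
  assumes "SB_generated G"
  shows "uncountable_cofinality G"
proof (rule ccontr)
  assume "\<not> uncountable_cofinality G"
  then obtain H :: "nat \<Rightarrow> 'a set" where sg: "\<And>n. subgroup (H n) G"
    and inc: "\<And>n. H n \<subset> H (Suc n)" and un: "(\<Union>n. H n) = carrier G"
    unfolding uncountable_cofinality_def by blast
  have mono: "H m \<subseteq> H n" if "m \<le> n" for m n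
    using lift_Suc_mono_le[of H, OF _ that] inc by blast
  have ex: "\<exists>n. g \<in> H n" if "g \<in> carrier G" for g using un that by blast
  define l where "l g = (LEAST n. g \<in> H n)" for g
  have lin: "g \<in> H (l g)" if "g \<in> carrier G" for g
    unfolding l_def using ex[OF that] by (metis LeastI)
  have lle: "l g \<le> n" if "g \<in> H n" for g n
    unfolding l_def using that by (rule Least_le)
  have lmul: "l (a \<otimes> b) \<le> max (l a) (l b)" if "a \<in> carrier G" "b \<in> carrier G" for a b
  proof -
    have "a \<in> H (max (l a) (l b))" using lin[OF that(1)] mono[of "l a" "max (l a) (l b)"] by auto
    moreover have "b \<in> H (max (l a) (l b))" using lin[OF that(2)] mono[of "l b" "max (l a) (l b)"] by auto
    ultimately show ?thesis using subgroup.m_closed[OF sg] lle by blast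
  qed
  have linv: "l (inv a) \<le> l a" if "a \<in> carrier G" for a
    using lle subgroup.m_inv_closed[OF sg lin[OF that]] by blast
  define d where "d x y = (if x = y then 0 else real (l (inv x \<otimes> y)) + 1)" for x y
  have sym: "d x y = d y x" if "x \<in> carrier G" "y \<in> carrier G" for x y
  proof -
    have e: "inv (inv x \<otimes> y) = inv y \<otimes> x" using that by (simp add: inv_mult_group)
    have "l (inv y \<otimes> x) \<le> l (inv x \<otimes> y)" using linv[of "inv x \<otimes> y"] e that by simp
    moreover have "l (inv x \<otimes> y) \<le> l (inv y \<otimes> x)" using linv[of "inv y \<otimes> x"] that
      by (simp add: inv_mult_group)
    ultimately show ?thesis unfolding d_def by auto
  qed
  have tri: "d x z \<le> d x y + d y z" if "x \<in> carrier G" "y \<in> carrier G" "z \<in> carrier G" for x y z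
  proof -
    have e: "inv x \<otimes> z = (inv x \<otimes> y) \<otimes> (inv y \<otimes> z)" using that
      by (simp add: m_assoc[symmetric]) (simp add: m_assoc)
    have "l (inv x \<otimes> z) \<le> max (l (inv x \<otimes> y)) (l (inv y \<otimes> z))"
      using e lmul that by simp
    then show ?thesis unfolding d_def by auto
  qed
  have inv_ok: "d (g \<otimes> x) (g \<otimes> y) = d x y" if h: "g \<in> carrier G" "x \<in> carrier G" "y \<in> carrier G" for g x y
  proof -
    have "inv (g \<otimes> x) \<otimes> (g \<otimes> y) = inv x \<otimes> y" using h
      by (simp add: inv_mult_group m_assoc[symmetric]) (simp add: m_assoc)
    then show ?thesis unfolding d_def using h by auto
  qed
  have nn: "0 \<le> d x y" for x y by (simp add: d_def)
  have z: "d x y = 0 \<longleftrightarrow> x = y" for x y by (simp add: d_def)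
  have lim: "left_invariant_metric G d"
    unfolding left_invariant_metric_def
    by (intro conjI ballI) (rule nn, rule z, rule sym, assumption+, rule tri, assumption+, rule inv_ok, assumption+)
  obtain S where S: "strongly_bounded G S" "generate G S = carrier G"
    using assms(1) unfolding SB_generated_def by blast
  then obtain M where M: "\<And>x y. x \<in> S \<Longrightarrow> y \<in> S \<Longrightarrow> d x y \<le> M" and Sc: "S \<subseteq> carrier G"
    using lim unfolding strongly_bounded_def by blast
  obtain K where SK: "S \<subseteq> H K"
  proof (cases "S = {}")
    case True then show ?thesis using that by blast
  next
    case False
    then obtain s where s: "s \<in> S" by blast
    define K where "K = max (l s) (nat \<lceil>M\<rceil>)"
    have "S \<subseteq> H K"
    proof
      fix x assume x: "x \<in> S"
      show "x \<in> H K"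
      proof (cases "x = s")
        case True then show ?thesis using lin[of s] s Sc mono[of "l s" K] K_def by auto
      next
        case False
        have "real (l (inv s \<otimes> x)) + 1 \<le> M" using M[OF s x] False unfolding d_def by auto
        then have "l (inv s \<otimes> x) \<le> K" unfolding K_def by linarith
        then have a: "inv s \<otimes> x \<in> H K" using lin[of "inv s \<otimes> x"] s x Sc mono by blast
        have b: "s \<in> H K" using lin[of s] s Sc mono[of "l s" K] K_def by auto
        have "s \<otimes> (inv s \<otimes> x) = x" using s x Sc by (metis inv_solve_left in_mono inv_closed m_closed)
        then show ?thesis using subgroup.m_closed[OF sg b a] by simp
      qed
    qed
    then show ?thesis using that by blast
  qed
  have "carrier G \<subseteq> H K" using generate_subgroup_incl[OF SK sg] S(2) by simp
  moreover have "H (Suc K) \<subseteq> carrier G" using un by blast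
  ultimately show False using inc[of K] by blast
qed

theorem proposition2p6:
  fixes G :: "('a, 'b) monoid_scheme"
  assumes "group G" and "SB_generated G"
  shows "uncountable_cofinality G"
  using group.main_aux[OF assms] .

end
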